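(* Let $C$ be a $4$-dimensional simple coalgebra over an algebraically closed field $\Bbbk$ of characteristic zero and $T:C\to C$ a coalgebra automorphism of finite order. If $\operatorname{Tr}(T)=0$, then $\operatorname{ord}(T)=2$. *)

theory Defs
  imports "HOL-Computational_Algebra.Polynomial"
begin

definition alg_closed :: "'k::field itself \<Rightarrow> bool" where
  "alg_closed _ \<longleftrightarrow> (\<forall>p::'k poly. degree p \<ge> 1 \<longrightarrow> (\<exists>x. poly p x = 0))"

text \<open>A finite-dimensional coalgebra is modelled on the coordinate space
  C = ('i \<Rightarrow> 'k) (basis e_i indexed by the finite type 'i), with
  C \<otimes> C = ('i \<Rightarrow> 'i \<Rightarrow> 'k) (basis e_j \<otimes> e_l).
  The comultiplication is given by structure constants
  \<Delta>(e_i) = \<Sum>j l. c i j l e_j \<otimes> e_l, the counit by \<epsilon>(e_i) = eps i.\<close>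

definition comul :: "('i::finite \<Rightarrow> 'i \<Rightarrow> 'i \<Rightarrow> 'k::field) \<Rightarrow> ('i \<Rightarrow> 'k) \<Rightarrow> ('i \<Rightarrow> 'i \<Rightarrow> 'k)" where
  "comul c x = (\<lambda>j l. \<Sum>i\<in>UNIV. x i * c i j l)"

definition counit :: "('i::finite \<Rightarrow> 'k::field) \<Rightarrow> ('i \<Rightarrow> 'k) \<Rightarrow> 'k" where
  "counit eps x = (\<Sum>i\<in>UNIV. x i * eps i)"

text \<open>Coassociativity (\<Delta>\<otimes>id)\<Delta> = (id\<otimes>\<Delta>)\<Delta> and counit laws
  (\<epsilon>\<otimes>id)\<Delta> = id = (id\<otimes>\<epsilon>)\<Delta>, written on basis vectors.\<close>
definition is_coalgebra :: "('i::finite \<Rightarrow> 'i \<Rightarrow> 'i \<Rightarrow> 'k::field) \<Rightarrow> ('i \<Rightarrow> 'k) \<Rightarrow> bool" where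
  "is_coalgebra c eps \<longleftrightarrow>
     (\<forall>i a b d. (\<Sum>j\<in>UNIV. c i j d * c j a b) = (\<Sum>l\<in>UNIV. c i a l * c l b d)) \<and>
     (\<forall>i l. (\<Sum>j\<in>UNIV. c i j l * eps j) = (if i = l then 1 else 0)) \<and>
     (\<forall>i j. (\<Sum>l\<in>UNIV. c i j l * eps l) = (if i = j then 1 else 0))"

definition is_subspace :: "('i \<Rightarrow> 'k::field) set \<Rightarrow> bool" where
  "is_subspace D \<longleftrightarrow> (\<lambda>_. 0) \<in> D \<and> (\<forall>x\<in>D. \<forall>y\<in>D. (\<lambda>i. x i + y i) \<in> D) \<and>
     (\<forall>a. \<forall>x\<in>D. (\<lambda>i. a * x i) \<in> D)"

text \<open>D \<otimes> D inside C \<otimes> C, for a subspace D: the span of all d \<otimes> e with d, e \<in> D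
  (scalars are absorbed since D is closed under scaling).\<close>
definition tensor_sq :: "('i::finite \<Rightarrow> 'k::field) set \<Rightarrow> ('i \<Rightarrow> 'i \<Rightarrow> 'k) set" where
  "tensor_sq D = {t. \<exists>F. finite F \<and> F \<subseteq> D \<times> D \<and>
                      t = (\<lambda>j l. \<Sum>(d, e)\<in>F. d j * e l)}"

definition is_subcoalgebra :: "('i::finite \<Rightarrow> 'i \<Rightarrow> 'i \<Rightarrow> 'k::field) \<Rightarrow> ('i \<Rightarrow> 'k) set \<Rightarrow> bool" where
  "is_subcoalgebra c D \<longleftrightarrow> is_subspace D \<and> (\<forall>x\<in>D. comul c x \<in> tensor_sq D)"

definition simple_coalgebra :: "('i::finite \<Rightarrow> 'i \<Rightarrow> 'i \<Rightarrow> 'k::field) \<Rightarrow> ('i \<Rightarrow> 'k) \<Rightarrow> bool" where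
  "simple_coalgebra c eps \<longleftrightarrow> is_coalgebra c eps \<and> (UNIV :: ('i \<Rightarrow> 'k) set) \<noteq> {\<lambda>_. 0} \<and>
     (\<forall>D. is_subcoalgebra c D \<longrightarrow> D = {\<lambda>_. 0} \<or> D = UNIV)"

definition lin :: "('i::finite \<Rightarrow> 'i \<Rightarrow> 'k::field) \<Rightarrow> ('i \<Rightarrow> 'k) \<Rightarrow> ('i \<Rightarrow> 'k)" where
  "lin t x = (\<lambda>j. \<Sum>i\<in>UNIV. t j i * x i)"

definition lin_tensor :: "('i::finite \<Rightarrow> 'i \<Rightarrow> 'k::field) \<Rightarrow> ('i \<Rightarrow> 'i \<Rightarrow> 'k) \<Rightarrow> ('i \<Rightarrow> 'i \<Rightarrow> 'k)" where
  "lin_tensor t M = (\<lambda>a b. \<Sum>j\<in>UNIV. \<Sum>l\<in>UNIV. t a j * t b l * M j l)"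

definition trace :: "('i::finite \<Rightarrow> 'i \<Rightarrow> 'k::field) \<Rightarrow> 'k" where
  "trace t = (\<Sum>i\<in>UNIV. t i i)"

definition coalgebra_map :: "('i::finite \<Rightarrow> 'i \<Rightarrow> 'i \<Rightarrow> 'k::field) \<Rightarrow> ('i \<Rightarrow> 'k) \<Rightarrow> ('i \<Rightarrow> 'i \<Rightarrow> 'k) \<Rightarrow> bool" where
  "coalgebra_map c eps t \<longleftrightarrow>
     (\<forall>x. comul c (lin t x) = lin_tensor t (comul c x)) \<and> (\<forall>x. counit eps (lin t x) = counit eps x)"

definition coalgebra_aut :: "('i::finite \<Rightarrow> 'i \<Rightarrow> 'i \<Rightarrow> 'k::field) \<Rightarrow> ('i \<Rightarrow> 'k) \<Rightarrow> ('i \<Rightarrow> 'i \<Rightarrow> 'k) \<Rightarrow> bool" where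
  "coalgebra_aut c eps t \<longleftrightarrow> coalgebra_map c eps t \<and> bij (lin t)"

definition finite_order :: "('a \<Rightarrow> 'a) \<Rightarrow> bool" where
  "finite_order f \<longleftrightarrow> (\<exists>n>0. f ^^ n = id)"

definition ord :: "('a \<Rightarrow> 'a) \<Rightarrow> nat" where
  "ord f = (LEAST n. n > 0 \<and> f ^^ n = id)"

end

theory Submission
  imports Defs "HOL-Analysis.Cartesian_Space"
begin

lemma dep_family:
  fixes w :: "nat \<Rightarrow> 'k::field^'i::finite"
  assumes "CARD('i) < m"
  shows "\<exists>c. (\<exists>k<m. c k \<noteq> 0) \<and> (\<Sum>k<m. c k *s w k) = 0"
proof (cases "inj_on w {..<m}")
  case False
  then obtain i j where ij: "i < m" "j < m" "i \<noteq> j" "w i = w j"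
    unfolding inj_on_def by auto
  define c where "c k = (if k = i then (1::'k) else if k = j then -1 else 0)" for k
  have "(\<Sum>k<m. c k *s w k) = (\<Sum>k<m. (if k = i then w k else 0) + (if k = j then - w k else 0))"
    by (rule sum.cong) (auto simp: c_def ij)
  also have "\<dots> = w i - w j" using ij by (simp add: sum.distrib)
  finally show ?thesis using ij by (intro exI[of _ c]) (auto simp: c_def)
next
  case True
  define W where "W = w ` {..<m}"
  have cW: "card W = m" using True by (simp add: W_def card_image)
  have "vec.dependent W"
  proof (rule ccontr)
    assume "\<not> vec.dependent W"
    then have "card W \<le> vec.dim (UNIV :: ('k^'i) set)"
      by (intro vec.independent_card_le_dim) auto
    then show False using cW assms by (simp add: card_cart_basis)
  qed
  then obtain t u where tu: "finite t" "t \<subseteq> W" "(\<Sum>v\<in>t. u v *s v) = 0" "\<exists>v\<in>t. u v \<noteq> 0"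
    unfolding vec.dependent_explicit by blast
  define c where "c k = (if w k \<in> t then u (w k) else 0)" for k
  have "(\<Sum>k<m. c k *s w k) = (\<Sum>k\<in>{k\<in>{..<m}. w k \<in> t}. u (w k) *s w k)"
  proof -
    have "(\<Sum>k<m. c k *s w k) = (\<Sum>k<m. if w k \<in> t then u (w k) *s w k else 0)"
      by (rule sum.cong) (auto simp: c_def)
    also have "\<dots> = (\<Sum>k\<in>{k\<in>{..<m}. w k \<in> t}. u (w k) *s w k)"
      by (simp add: sum.inter_filter[symmetric] lessThan_def)
    finally show ?thesis .
  qed
  also have "\<dots> = (\<Sum>v\<in>w ` {k\<in>{..<m}. w k \<in> t}. u v *s v)"
    by (rule sum.reindex[symmetric, unfolded comp_def]) (use True in \<open>auto simp: inj_on_def\<close>)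
  also have "w ` {k\<in>{..<m}. w k \<in> t} = t" using tu(2) by (auto simp: W_def)
  finally have "(\<Sum>k<m. c k *s w k) = 0" using tu(3) by simp
  moreover obtain v where "v \<in> t" "u v \<noteq> 0" using tu(4) by blast
  then obtain k where "k < m" "w k = v" using tu(2) by (auto simp: W_def)
  ultimately show ?thesis using \<open>u v \<noteq> 0\<close> \<open>v \<in> t\<close> by (intro exI[of _ c]) (auto simp: c_def)
qed


locale salg =
  fixes mul :: "'k::field^'i::finite \<Rightarrow> 'k^'i \<Rightarrow> 'k^'i" (infixl "\<odot>" 70)
    and one :: "'k^'i"
  assumes assoc: "(x \<odot> y) \<odot> z = x \<odot> (y \<odot> z)"
    and addL: "(x + y) \<odot> z = x \<odot> z + y \<odot> z"
    and addR: "x \<odot> (y + z) = x \<odot> y + x \<odot> z"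
    and scaleL: "(a *s x) \<odot> y = a *s (x \<odot> y)"
    and scaleR: "x \<odot> (a *s y) = a *s (x \<odot> y)"
    and oneL: "one \<odot> x = x" and oneR: "x \<odot> one = x"
    and simple: "x \<noteq> 0 \<Longrightarrow> one \<in> vec.span {a \<odot> x \<odot> b | a b. True}"
    and ac: "alg_closed TYPE('k)"
    and card4: "CARD('i) = 4"
begin

lemma linL: "Vector_Spaces.linear (*s) (*s) (\<lambda>x. a \<odot> x)"
  unfolding Vector_Spaces.linear_iff by (simp add: addR scaleR vec.vector_space_axioms)
lemma linR: "Vector_Spaces.linear (*s) (*s) (\<lambda>x. x \<odot> a)"
  unfolding Vector_Spaces.linear_iff by (simp add: addL scaleL vec.vector_space_axioms)

lemma zeroL[simp]: "0 \<odot> x = 0" using vec.linear_0[OF linR] by simp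
lemma zeroR[simp]: "x \<odot> 0 = 0" using vec.linear_0[OF linL] by simp
lemma diffL: "(x - y) \<odot> z = x \<odot> z - y \<odot> z" using vec.linear_diff[OF linR] by simp
lemma diffR: "z \<odot> (x - y) = z \<odot> x - z \<odot> y" using vec.linear_diff[OF linL] by simp
lemma negL: "(- x) \<odot> z = - (x \<odot> z)" using vec.linear_neg[OF linR] by simp
lemma negR: "z \<odot> (- x) = - (z \<odot> x)" using vec.linear_neg[OF linL] by simp
lemma sumL: "(\<Sum>k\<in>K. f k) \<odot> z = (\<Sum>k\<in>K. f k \<odot> z)" using vec.linear_sum[OF linR] by simp
lemma sumR: "z \<odot> (\<Sum>k\<in>K. f k) = (\<Sum>k\<in>K. z \<odot> f k)" using vec.linear_sum[OF linL] by simp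

lemmas ring_simps = addL addR scaleL scaleR diffL diffR negL negR oneL oneR

lemma one_neq0: "one \<noteq> 0"
proof
  assume "one = 0"
  then have "x = 0" for x :: "'k^'i" using oneL[of x] by simp
  then show False using vec.dependent_single[of "axis undefined (1::'k)"]
    by (metis axis_nth zero_index zero_neq_one)
qed

lemma simp2:
  assumes "x \<noteq> 0" and h: "\<And>a b. p \<odot> (a \<odot> x \<odot> b) \<odot> q = 0"
  shows "p \<odot> q = 0"
proof -
  have "one \<in> vec.span {a \<odot> x \<odot> b | a b. True}" using simple[OF assms(1)] .
  then have "p \<odot> one \<odot> q = 0"
  proof (induct rule: vec.span_induct_alt)
    case base then show ?case by simp
  next
    case (step c g y)
    then obtain a b where "g = a \<odot> x \<odot> b" by auto
    then show ?case using step h by (simp add: ring_simps)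
  qed
  then show ?thesis by (simp add: oneR)
qed

end


context salg begin

primrec pw :: "'k^'i \<Rightarrow> 'k^'i \<Rightarrow> nat \<Rightarrow> 'k^'i" where
  "pw f y 0 = f" | "pw f y (Suc k) = y \<odot> pw f y k"

definition peval :: "'k^'i \<Rightarrow> 'k^'i \<Rightarrow> 'k poly \<Rightarrow> 'k^'i" where
  "peval f y p = (\<Sum>k\<le>degree p. coeff p k *s pw f y k)"

lemma peval_N: "degree p \<le> N \<Longrightarrow> peval f y p = (\<Sum>k\<le>N. coeff p k *s pw f y k)"
  unfolding peval_def
  by (rule sum.mono_neutral_left) (auto simp: coeff_eq_0)

lemma peval_add: "peval f y (p + q) = peval f y p + peval f y q"
proof -
  let ?N = "max (degree p) (degree q)"
  have "degree (p + q) \<le> ?N" by (rule degree_add_le) auto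
  then show ?thesis
    by (simp add: peval_N[of _ ?N] peval_N[of p ?N] peval_N[of q ?N] scaleR_add_left
        vector_sadd_rdistrib sum.distrib)
qed

lemma peval_smult: "peval f y (smult a p) = a *s peval f y p"
  by (simp add: peval_N[of "smult a p" "degree p"] peval_N[of p "degree p"] vec.scale_sum_right)

lemma peval_pCons0:
  shows "peval f y (pCons 0 p) = y \<odot> peval f y p"
proof -
  have "peval f y (pCons 0 p) = (\<Sum>k\<le>Suc (degree p). coeff (pCons 0 p) k *s pw f y k)"
    by (rule peval_N) (simp add: degree_pCons_le)
  also have "\<dots> = (\<Sum>k\<le>degree p. coeff p k *s pw f y (Suc k))"
    by (subst sum.atMost_Suc_shift) simp
  also have "\<dots> = y \<odot> peval f y p"
    by (simp add: peval_def sumR scaleR)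
  finally show ?thesis .
qed

lemma pw_props:
  assumes ff: "f \<odot> f = f" and yf: "y \<odot> f = y" and fy: "f \<odot> y = y"
  shows "f \<odot> pw f y k = pw f y k \<and> pw f y k \<odot> f = pw f y k \<and> pw f y k \<odot> y = y \<odot> pw f y k"
proof (induct k)
  case 0 then show ?case using assms by simp
next
  case (Suc k) then show ?case using assms by (simp add: assoc[symmetric]) (simp add: assoc)
qed

lemma peval_props:
  assumes ff: "f \<odot> f = f" and yf: "y \<odot> f = y" and fy: "f \<odot> y = y"
  shows "f \<odot> peval f y p = peval f y p \<and> peval f y p \<odot> f = peval f y p \<and> peval f y p \<odot> y = y \<odot> peval f y p"
  using pw_props[OF assms] by (simp add: peval_def sumR sumL scaleR scaleL)

lemma eig:
  assumes ff: "f \<odot> f = f" and yf: "y \<odot> f = y" and fy: "f \<odot> y = y" and f0: "f \<noteq> 0"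
  shows "\<exists>lam v. v \<noteq> 0 \<and> f \<odot> v = v \<and> v \<odot> f = v \<and> y \<odot> v = lam *s v \<and> v \<odot> y = lam *s v"
proof -
  obtain c where c: "\<exists>k<5. c k \<noteq> 0" "(\<Sum>k<5. c k *s pw f y k) = 0"
    using dep_family[of 5 "pw f y"] card4 by auto
  define p0 where "p0 = Poly (map c [0..<5])"
  have cp0: "coeff p0 k = (if k < 5 then c k else 0)" for k
    by (simp add: p0_def nth_default_def)
  have dp0: "degree p0 \<le> 4" by (rule degree_le) (simp add: cp0)
  have "p0 \<noteq> 0" using c(1) cp0 by (metis coeff_0)
  moreover have "peval f y p0 = 0"
  proof -
    have "peval f y p0 = (\<Sum>k\<le>4. coeff p0 k *s pw f y k)" by (rule peval_N[OF dp0])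
    also have "\<dots> = (\<Sum>k<5. c k *s pw f y k)"
      by (simp add: lessThan_Suc_atMost[symmetric] cp0 del: lessThan_Suc)
    finally show ?thesis using c(2) by simp
  qed
  ultimately obtain p where p: "p \<noteq> 0" "peval f y p = 0"
    and pmin: "\<And>q. q \<noteq> 0 \<and> peval f y q = 0 \<Longrightarrow> degree p \<le> degree q"
    using ex_has_least_nat[of "\<lambda>q. q \<noteq> 0 \<and> peval f y q = 0" p0 degree] by blast
  have "degree p \<noteq> 0"
  proof
    assume d: "degree p = 0"
    then have "peval f y p = coeff p 0 *s f" by (simp add: peval_def)
    moreover have "coeff p 0 \<noteq> 0" using p(1) d leading_coeff_0_iff by metis
    ultimately show False using p(2) f0 by simp
  qed
  then obtain lam where "poly p lam = 0"
    using ac[unfolded alg_closed_def, rule_format, of p] by auto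
  then obtain q where pq: "p = [:-lam, 1:] * q" by (auto simp: poly_eq_0_iff_dvd)
  have q0: "q \<noteq> 0" using p(1) pq by auto
  have "degree ([:-lam, 1:] * q) = degree [:-lam, 1:] + degree q"
    by (rule degree_mult_eq) (use q0 in auto)
  then have "degree p = degree q + 1" using pq by simp
  then have "peval f y q \<noteq> 0" using pmin[of q] q0 by auto
  moreover have "[:-lam, 1:] * q = smult (-lam) q + pCons 0 q" by simp
  then have "peval f y p = (-lam) *s peval f y q + y \<odot> peval f y q"
    unfolding pq by (simp only: peval_add peval_smult peval_pCons0)
  then have "y \<odot> peval f y q = lam *s peval f y q" using p(2)
    by (simp add: algebra_simps)
  ultimately show ?thesis using peval_props[OF ff yf fy, of q] by metis
qed

end

context salg begin

definition lideal :: "('k^'i) set \<Rightarrow> bool" where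
  "lideal L \<longleftrightarrow> vec.subspace L \<and> (\<forall>a x. x \<in> L \<longrightarrow> a \<odot> x \<in> L)"

lemma lideal_range: "lideal (range (\<lambda>a. a \<odot> z))"
  unfolding lideal_def
  by (auto simp: vec.linear_subspace_image[OF linR vec.subspace_UNIV] assoc[symmetric])

lemma nonscalar: "\<exists>a. \<forall>lam. a \<noteq> lam *s one"
proof -
  obtain i j :: 'i where ij: "i \<noteq> j"
  proof -
    have "\<not> card (UNIV::'i set) \<le> Suc 0" using card4 by simp
    then show ?thesis using that by (auto simp: card_le_Suc0_iff_eq)
  qed
  show ?thesis
  proof (rule ccontr)
    assume "\<not> ?thesis"
    then obtain a b where a: "axis i (1::'k) = a *s one" and b: "axis j (1::'k) = b *s one" by blast
    have "a \<noteq> 0" using a by (metis axis_nth vector_smult_lzero zero_index zero_neq_one)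
    have "b \<noteq> 0" using b by (metis axis_nth vector_smult_lzero zero_index zero_neq_one)
    have "one = (1/a) *s axis i 1" using a \<open>a \<noteq> 0\<close> by simp
    moreover have "one = (1/b) *s axis j 1" using b \<open>b \<noteq> 0\<close> by simp
    ultimately have "((1/a) *s axis i (1::'k)) $ i = ((1/b) *s axis j 1) $ i" by simp
    then show False using ij \<open>a \<noteq> 0\<close> by (simp add: axis_def)
  qed
qed

lemma proper_lideal: "\<exists>N. lideal N \<and> N \<noteq> {0} \<and> one \<notin> N"
proof -
  obtain a where a: "\<And>lam. a \<noteq> lam *s one" using nonscalar by blast
  obtain lam v where v: "v \<noteq> 0" "a \<odot> v = lam *s v" "v \<odot> a = lam *s v"
    using eig[of one a] by (auto simp: oneL oneR one_neq0)
  let ?N = "range (\<lambda>x. x \<odot> v)"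
  have "v \<in> ?N" by (metis oneL rangeI)
  moreover have "one \<notin> ?N"
  proof
    assume "one \<in> ?N"
    then obtain x where x: "one = x \<odot> v" by auto
    have "v \<odot> (a - lam *s one) = 0" using v by (simp add: diffR scaleR oneR)
    then have "a - lam *s one = 0" by (metis assoc oneL x zeroR)
    then show False using a by simp
  qed
  ultimately show ?thesis using lideal_range v(1) by blast
qed

lemma lideal_0: "lideal L \<Longrightarrow> 0 \<in> L"
  unfolding lideal_def by (simp add: vec.subspace_0)

lemma mu_exists:
  "\<exists>e u v. e \<odot> e = e \<and> e \<odot> u = u \<and> u \<odot> e = 0 \<and> e \<odot> v = 0 \<and> v \<odot> e = v \<and> u \<odot> v = e
     \<and> one = e + v \<odot> u \<and> e \<noteq> 0 \<and> (\<forall>y. \<exists>lam. e \<odot> y \<odot> e = lam *s e)"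
proof -
  obtain N where N: "lideal N" "N \<noteq> {0}" "one \<notin> N" using proper_lideal by blast
  obtain L where L: "lideal L" "L \<noteq> {0}"
    and Lmin: "\<And>K. lideal K \<and> K \<noteq> {0} \<Longrightarrow> vec.dim L \<le> vec.dim K"
    using ex_has_least_nat[of "\<lambda>K. lideal K \<and> K \<noteq> {0}" N vec.dim] N by blast
  have Lsub: "vec.subspace L" using L(1) by (simp add: lideal_def)
  have Lmul: "x \<in> L \<Longrightarrow> a \<odot> x \<in> L" for a x using L(1) by (simp add: lideal_def)
  have minL: "K = L" if "lideal K" "K \<subseteq> L" "K \<noteq> {0}" for K
    using vec.subspace_dim_equal[of K L] that Lmin[of K] Lsub by (auto simp: lideal_def)
  have oneL_notin: "one \<notin> L"
  proof
    assume "one \<in> L"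
    then have "L = UNIV" using Lmul by (metis UNIV_eq_I oneR)
    then have "vec.dim (UNIV::('k^'i) set) \<le> vec.dim N" using Lmin N by auto
    then have "N = UNIV"
      using vec.subspace_dim_equal[of N UNIV] N(1) vec.subspace_UNIV by (auto simp: lideal_def)
    then show False using N(3) by simp
  qed
  obtain x0 l0 where x0: "x0 \<in> L" "l0 \<in> L" "l0 \<odot> x0 \<noteq> 0"
  proof (rule ccontr)
    assume "\<not> thesis"
    then have z: "\<And>x l. x \<in> L \<Longrightarrow> l \<in> L \<Longrightarrow> l \<odot> x = 0" using that by blast
    obtain x where x: "x \<in> L" "x \<noteq> 0" using L(2) lideal_0[OF L(1)] by blast
    have "one \<odot> x = 0"
    proof (rule simp2[OF x(2)])
      fix a b show "one \<odot> (a \<odot> x \<odot> b) \<odot> x = 0"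
        using z[OF Lmul[OF x(1), of b] x(1)] by (simp add: assoc oneL)
    qed
    then show False using x by (simp add: oneL)
  qed
  have x0nz: "x0 \<noteq> 0" using x0 by auto
  have "lideal ((\<lambda>l. l \<odot> x0) ` L)"
    unfolding lideal_def
    by (auto simp: vec.linear_subspace_image[OF linR Lsub] assoc[symmetric] intro!: imageI Lmul)
  moreover have "(\<lambda>l. l \<odot> x0) ` L \<subseteq> L" using Lmul x0(1) by auto
  moreover have "(\<lambda>l. l \<odot> x0) ` L \<noteq> {0}" using x0 by auto
  ultimately have "(\<lambda>l. l \<odot> x0) ` L = L" by (rule minL)
  then obtain e where e: "e \<in> L" "e \<odot> x0 = x0" using x0(1) by (metis imageE)
  let ?K2 = "{l \<in> L. l \<odot> x0 = 0}"
  have "lideal ?K2"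
    unfolding lideal_def
  proof (intro conjI allI impI)
    show "vec.subspace ?K2" using Lsub unfolding vec.subspace_def
      by (auto simp: addL scaleL)
  qed (auto simp: Lmul assoc)
  moreover have "?K2 \<noteq> L" using e x0nz by (metis (mono_tags, lifting) mem_Collect_eq)
  ultimately have K2: "?K2 = {0}" using minL by blast
  have "e \<odot> e - e \<in> ?K2"
    using e Lmul vec.subspace_diff[OF Lsub] by (simp add: diffL assoc)
  then have ee: "e \<odot> e = e" using K2 by auto
  have e0: "e \<noteq> 0" using e x0nz by auto
  have e1: "e \<noteq> one" using e oneL_notin by auto
  have linv: "\<exists>w. w \<odot> z = e" if "z \<noteq> 0" "z \<odot> e = z" for z
  proof -
    have "z \<in> L" using that Lmul[OF e(1)] by metis
    then have "range (\<lambda>a. a \<odot> z) \<subseteq> L" using Lmul by auto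
    moreover have "range (\<lambda>a. a \<odot> z) \<noteq> {0}" using that by (metis oneL rangeI singletonD)
    ultimately have "range (\<lambda>a. a \<odot> z) = L" using minL lideal_range by blast
    then show ?thesis using e(1) by auto
  qed
  have escal: "\<exists>lam. e \<odot> y \<odot> e = lam *s e" for y
  proof -
    let ?y = "e \<odot> y \<odot> e"
    have y1: "?y \<odot> e = ?y" "e \<odot> ?y = ?y" using ee by (simp_all add: assoc) (simp_all add: assoc[symmetric])
    obtain mu v where v: "v \<noteq> 0" "e \<odot> v = v" "?y \<odot> v = mu *s v"
      using eig[OF ee y1 e0] by blast
    show ?thesis
    proof (cases "?y - mu *s e = 0")
      case True then show ?thesis by auto
    next
      case False
      have "(?y - mu *s e) \<odot> e = ?y - mu *s e" using y1 ee by (simp add: diffL scaleL)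
      then obtain w where w: "w \<odot> (?y - mu *s e) = e" using linv False by blast
      have "(?y - mu *s e) \<odot> v = 0" using v by (simp add: diffL scaleL)
      then have "e \<odot> v = 0" using w by (metis assoc zeroR)
      then show ?thesis using v by simp
    qed
  qed
  define f where "f = one - e"
  have ff: "f \<odot> f = f" and ef: "e \<odot> f = 0" and fe: "f \<odot> e = 0"
    using ee by (simp_all add: f_def diffL diffR oneL oneR)
  have f0: "f \<noteq> 0" using e1 by (simp add: f_def)
  obtain b where b: "e \<odot> b \<odot> f \<noteq> 0"
  proof (rule ccontr)
    assume "\<not> thesis"
    then have z: "\<And>b. e \<odot> b \<odot> f = 0" using that by blast
    have "f \<odot> f = 0"
    proof (rule simp2[OF e0])
      fix a b' show "f \<odot> (a \<odot> e \<odot> b') \<odot> f = 0"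
        using z[of b'] by (metis assoc zeroR)
    qed
    then show False using ff f0 by simp
  qed
  define u where "u = e \<odot> b \<odot> f"
  have u0: "u \<noteq> 0" using b by (simp add: u_def)
  have uf: "u \<odot> f = u" using ff by (simp add: u_def assoc)
  have eu: "e \<odot> u = u" using ee by (simp add: u_def assoc[symmetric])
  have ue: "u \<odot> e = 0" using fe by (simp add: u_def assoc)
  obtain b' where b': "u \<odot> b' \<odot> e \<noteq> 0"
  proof (rule ccontr)
    assume "\<not> thesis"
    then have z: "\<And>b. u \<odot> b \<odot> e = 0" using that by blast
    have "e \<odot> e = 0"
    proof (rule simp2[OF u0])
      fix a b'' show "e \<odot> (a \<odot> u \<odot> b'') \<odot> e = 0"
        using z[of b''] by (metis assoc zeroR)
    qed
    then show False using ee e0 by simp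
  qed
  define v0 where "v0 = f \<odot> b' \<odot> e"
  have uv0: "u \<odot> v0 = u \<odot> b' \<odot> e" using uf by (simp add: v0_def assoc[symmetric])
  obtain alpha where alpha: "u \<odot> v0 = alpha *s e"
  proof -
    have ff2: "f \<odot> (f \<odot> z) = f \<odot> z" for z using ff by (simp add: assoc[symmetric])
    show ?thesis using escal[of "b \<odot> f \<odot> b'"] that by (auto simp: u_def v0_def assoc ff2)
  qed
  have a0: "alpha \<noteq> 0" using alpha uv0 b' by auto
  define v where "v = (1/alpha) *s v0"
  have uv: "u \<odot> v = e" using alpha a0 by (simp add: v_def scaleR)
  have ve: "v \<odot> e = v" using ee by (simp add: v_def v0_def scaleL assoc)
  have ev: "e \<odot> v = 0" using ef by (simp add: v_def v0_def scaleR assoc[symmetric])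
  define g where "g = one - e - v \<odot> u"
  have "g = 0"
  proof (rule ccontr)
    assume g0: "g \<noteq> 0"
    define w where "w k = (if k = 0 then e else if k = 1 then u else if k = 2 then v
       else if k = 3 then v \<odot> u else g)" for k :: nat
    obtain c where c: "\<exists>k<5. c k \<noteq> 0" "(\<Sum>k<5. c k *s w k) = 0"
      using dep_family[of 5 w] card4 by auto
    have S: "(\<Sum>k<5. c k *s w k) = c 0 *s e + c 1 *s u + c 2 *s v + c 3 *s (v \<odot> u) + c 4 *s g"
      by (simp add: numeral_eq_Suc w_def algebra_simps)
    have uu: "u \<odot> u = 0" by (metis assoc eu ue zeroL)
    have vv: "v \<odot> v = 0" by (metis assoc ev ve zeroR)
    note rels = ee eu ue ev ve uv uu vv
    have rels2: "e \<odot> (e \<odot> z) = e \<odot> z" "e \<odot> (u \<odot> z) = u \<odot> z" "u \<odot> (e \<odot> z) = 0"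
      "e \<odot> (v \<odot> z) = 0" "v \<odot> (e \<odot> z) = v \<odot> z" "u \<odot> (v \<odot> z) = e \<odot> z"
      "u \<odot> (u \<odot> z) = 0" "v \<odot> (v \<odot> z) = 0" for z
      by (simp_all add: assoc[symmetric] rels)
    note SS = S c(2)
    have eq: "x \<odot> (c 0 *s e + c 1 *s u + c 2 *s v + c 3 *s (v \<odot> u) + c 4 *s g) \<odot> y = 0" for x y
      using SS by simp
    have "c 0 *s e = 0" using eq[of e e]
      by (simp add: g_def ring_simps assoc rels rels2)
    moreover have "c 1 *s e = 0" using eq[of e v]
      by (simp add: g_def ring_simps assoc rels rels2)
    moreover have "c 2 *s e = 0" using eq[of u e]
      by (simp add: g_def ring_simps assoc rels rels2)
    moreover have "c 3 *s e = 0" using eq[of u v]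
      by (simp add: g_def ring_simps assoc rels rels2)
    ultimately have "c 0 = 0" "c 1 = 0" "c 2 = 0" "c 3 = 0" using e0 by auto
    moreover have "c 4 = 0" using SS calculation g0 by simp
    ultimately show False using c(1) by (auto simp: numeral_eq_Suc less_Suc_eq)
  qed
  then have "one = e + v \<odot> u" by (simp add: g_def algebra_simps)
  then show ?thesis using ee eu ue ev ve uv e0 escal by blast
qed

end

locale salg_mu = salg +
  fixes e u v :: "'a::field^'b::finite"
  assumes ee: "e \<odot> e = e" and eu: "e \<odot> u = u" and ue: "u \<odot> e = 0" and ev: "e \<odot> v = 0"
    and ve: "v \<odot> e = v" and uv: "u \<odot> v = e" and one_eq: "one = e + v \<odot> u" and e0: "e \<noteq> 0"
    and escal: "\<exists>lam. e \<odot> y \<odot> e = lam *s e"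
begin

lemma uu: "u \<odot> u = 0" by (metis assoc eu ue zeroL)
lemma vv: "v \<odot> v = 0" by (metis assoc ev ve zeroR)

lemmas tab = ee eu ue ev ve uv uu vv

lemma tab2: "e \<odot> (e \<odot> z) = e \<odot> z" "e \<odot> (u \<odot> z) = u \<odot> z" "u \<odot> (e \<odot> z) = 0"
      "e \<odot> (v \<odot> z) = 0" "v \<odot> (e \<odot> z) = v \<odot> z" "u \<odot> (v \<odot> z) = e \<odot> z"
      "u \<odot> (u \<odot> z) = 0" "v \<odot> (v \<odot> z) = 0" for z
  by (simp_all add: assoc[symmetric] tab)

definition Mx :: "'a \<Rightarrow> 'a \<Rightarrow> 'a \<Rightarrow> 'a \<Rightarrow> 'a^'b" where
  "Mx a b c d = a *s e + b *s u + c *s v + d *s (v \<odot> u)"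

lemma Mmul: "Mx a b c d \<odot> Mx a' b' c' d' =
   Mx (a * a' + b * c') (a * b' + b * d') (c * a' + d * c') (c * b' + d * d')"
proof -
  have w1: "v \<odot> u \<odot> e = 0" "v \<odot> u \<odot> u = 0" "v \<odot> u \<odot> v = v" "v \<odot> u \<odot> (v \<odot> u) = v \<odot> u"
    "e \<odot> (v \<odot> u) = 0" "u \<odot> (v \<odot> u) = u" "v \<odot> (v \<odot> u) = 0"
    by (simp_all add: assoc tab tab2)
  show ?thesis
    unfolding Mx_def
    by (simp only: addL addR scaleL scaleR tab w1 vec.scale_zero_right add_0_left add_0_right)
       (simp add: vec_eq_iff algebra_simps)
qed

lemma one_Mx: "Mx 1 0 0 1 = one" by (simp add: Mx_def one_eq)
lemma e_Mx: "Mx 1 0 0 0 = e" by (simp add: Mx_def)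
lemma u_Mx: "Mx 0 1 0 0 = u" by (simp add: Mx_def)
lemma v_Mx: "Mx 0 0 1 0 = v" by (simp add: Mx_def)
lemma w_Mx: "Mx 0 0 0 1 = v \<odot> u" by (simp add: Mx_def)

definition kap :: "'a^'b \<Rightarrow> 'a" where
  "kap y = (SOME lam. e \<odot> y \<odot> e = lam *s e)"

lemma kap_spec: "e \<odot> y \<odot> e = kap y *s e"
  unfolding kap_def using escal[of y] by (rule someI_ex)

lemma kap_unique: "e \<odot> y \<odot> e = lam *s e \<Longrightarrow> kap y = lam"
  using kap_spec[of y] e0 by (metis vec.scale_right_imp_eq)

lemma kap_add: "kap (x + y) = kap x + kap y"
  by (rule kap_unique) (simp add: addL addR kap_spec vector_sadd_rdistrib)

lemma kap_scale: "kap (a *s x) = a * kap x"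
  by (rule kap_unique) (simp add: scaleL scaleR kap_spec)

lemma kap_zero: "kap 0 = 0"
  by (rule kap_unique) simp

lemma kap_sum: "kap (\<Sum>i\<in>A. f i) = (\<Sum>i\<in>A. kap (f i))"
  by (induct A rule: infinite_finite_induct) (simp_all add: kap_zero kap_add)

lemma kap_Mx: "kap (Mx a b c d) = a"
proof (rule kap_unique)
  have "Mx 1 0 0 0 \<odot> Mx a b c d \<odot> Mx 1 0 0 0 = Mx a 0 0 0" by (simp add: Mmul)
  then show "e \<odot> Mx a b c d \<odot> e = a *s e"
    by (simp add: e_Mx) (simp add: Mx_def)
qed

definition co0 where "co0 X = kap X"
definition co1 where "co1 X = kap (X \<odot> v)"
definition co2 where "co2 X = kap (u \<odot> X)"
definition co3 where "co3 X = kap (u \<odot> X \<odot> v)"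

lemma co_Mx: "co0 (Mx a b c d) = a" "co1 (Mx a b c d) = b" "co2 (Mx a b c d) = c" "co3 (Mx a b c d) = d"
proof -
  have 1: "Mx a' b' c' d' \<odot> v = Mx b' 0 d' 0" for a' b' c' d' using Mmul[of a' b' c' d' 0 0 1 0] by (simp add: v_Mx)
  have 2: "u \<odot> Mx a b c d = Mx c d 0 0" using Mmul[of 0 1 0 0 a b c d] by (simp add: u_Mx)
  show "co0 (Mx a b c d) = a" "co1 (Mx a b c d) = b" "co2 (Mx a b c d) = c" "co3 (Mx a b c d) = d"
    by (simp_all add: co0_def co1_def co2_def co3_def kap_Mx 1 2)
qed

lemma expand: "X = Mx (co0 X) (co1 X) (co2 X) (co3 X)"
proof -
  have "X = one \<odot> X \<odot> one" by (simp add: oneL oneR)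
  also have "\<dots> = e \<odot> X \<odot> e + e \<odot> X \<odot> (v \<odot> u) + (v \<odot> u) \<odot> X \<odot> e + (v \<odot> u) \<odot> X \<odot> (v \<odot> u)"
    by (simp add: one_eq addL addR)
  also have "e \<odot> X \<odot> (v \<odot> u) = (e \<odot> (X \<odot> v) \<odot> e) \<odot> u" by (simp add: assoc tab tab2)
  also have "(v \<odot> u) \<odot> X \<odot> e = v \<odot> (e \<odot> (u \<odot> X) \<odot> e)" by (simp add: assoc tab tab2)
  also have "(v \<odot> u) \<odot> X \<odot> (v \<odot> u) = v \<odot> (e \<odot> (u \<odot> X \<odot> v) \<odot> e) \<odot> u" by (simp add: assoc tab tab2)
  finally show ?thesis
    by (simp add: kap_spec scaleL scaleR tab Mx_def co0_def co1_def co2_def co3_def)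
qed

end

context salg_mu begin

lemma S_inj:
  assumes Slin: "Vector_Spaces.linear (*s) (*s) S"
    and Smul: "\<And>x y. S (x \<odot> y) = S x \<odot> S y" and Sone: "S one = one"
    and Sx: "S x = 0"
  shows "x = 0"
proof (rule ccontr)
  assume x0: "x \<noteq> 0"
  have "one \<in> vec.span {a \<odot> x \<odot> b | a b. True}" by (rule simple[OF x0])
  then have "S one = 0"
  proof (induct rule: vec.span_induct_alt)
    case base then show ?case using vec.linear_0[OF Slin] by simp
  next
    case (step c g y)
    then obtain a b where "g = a \<odot> x \<odot> b" by auto
    then show ?case using step Sx Smul vec.linear_add[OF Slin] vec.linear_scale[OF Slin] by simp
  qed
  then show False using Sone one_neq0 by simp
qed

lemma skolem:
  assumes Slin: "Vector_Spaces.linear (*s) (*s) S"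
    and Smul: "\<And>x y. S (x \<odot> y) = S x \<odot> S y" and Sone: "S one = one"
  shows "\<exists>P Q. Q \<odot> P = one \<and> P \<odot> Q = one \<and> (\<forall>X. S X = P \<odot> X \<odot> Q)"
proof -
  have Sadd: "S (x + y) = S x + S y" for x y using vec.linear_add[OF Slin] .
  have Sscale: "S (c *s x) = c *s S x" for c x using vec.linear_scale[OF Slin] .
  define F1 where "F1 = S e"
  define Fu where "Fu = S u"
  define Fv where "Fv = S v"
  have Ftab: "F1 \<odot> F1 = F1" "F1 \<odot> Fu = Fu" "Fu \<odot> F1 = 0" "F1 \<odot> Fv = 0" "Fv \<odot> F1 = Fv"
    "Fu \<odot> Fv = F1" "Fu \<odot> Fu = 0" "Fv \<odot> Fv = 0"
    unfolding F1_def Fu_def Fv_def Smul[symmetric] using vec.linear_0[OF Slin]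
    by (simp_all add: tab)
  have Ftab2: "F1 \<odot> (F1 \<odot> z) = F1 \<odot> z" "F1 \<odot> (Fu \<odot> z) = Fu \<odot> z" "Fu \<odot> (F1 \<odot> z) = 0"
      "F1 \<odot> (Fv \<odot> z) = 0" "Fv \<odot> (F1 \<odot> z) = Fv \<odot> z" "Fu \<odot> (Fv \<odot> z) = F1 \<odot> z"
      "Fu \<odot> (Fu \<odot> z) = 0" "Fv \<odot> (Fv \<odot> z) = 0" for z
    by (simp_all add: assoc[symmetric] Ftab)
  have F10: "F1 \<noteq> 0" using S_inj[OF Slin Smul Sone, of e] e0 by (auto simp: F1_def)
  obtain a b where ab: "e \<odot> (a \<odot> F1 \<odot> b) \<odot> e \<noteq> 0"
  proof (rule ccontr)
    assume "\<not> thesis"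
    then have "\<And>a b. e \<odot> (a \<odot> F1 \<odot> b) \<odot> e = 0" using that by blast
    then have "e \<odot> e = 0" by (rule simp2[OF F10])
    then show False using ee e0 by simp
  qed
  define alpha where "alpha = kap (a \<odot> F1 \<odot> b)"
  have a0: "alpha \<noteq> 0" using ab kap_spec[of "a \<odot> F1 \<odot> b"] by (auto simp: alpha_def)
  have al: "e \<odot> (a \<odot> (F1 \<odot> (b \<odot> e))) = alpha *s e"
    using kap_spec[of "a \<odot> F1 \<odot> b"] by (simp add: alpha_def assoc)
  define P where "P = F1 \<odot> b \<odot> e + Fv \<odot> b \<odot> u"
  define Q where "Q = (1/alpha) *s (e \<odot> a \<odot> F1 + v \<odot> a \<odot> Fu)"
  have SM: "S (Mx c1 c2 c3 c4) = c1 *s F1 + c2 *s Fu + c3 *s Fv + c4 *s (Fv \<odot> Fu)" for c1 c2 c3 c4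
    by (simp add: Mx_def Sadd Sscale Smul F1_def Fu_def Fv_def)
  have PX: "P \<odot> X = S X \<odot> P" for X
  proof -
    have "P \<odot> Mx c1 c2 c3 c4 = S (Mx c1 c2 c3 c4) \<odot> P" for c1 c2 c3 c4
      unfolding SM unfolding P_def Mx_def
      by (simp add: ring_simps assoc tab tab2 Ftab Ftab2)
    then show ?thesis by (metis expand)
  qed
  have QP: "Q \<odot> P = one"
  proof -
    have "e \<odot> (a \<odot> (F1 \<odot> (b \<odot> e))) + v \<odot> (a \<odot> (F1 \<odot> (b \<odot> u))) = alpha *s one"
    proof -
      have "v \<odot> (a \<odot> (F1 \<odot> (b \<odot> u))) = v \<odot> (e \<odot> (a \<odot> (F1 \<odot> (b \<odot> e)))) \<odot> u"
        by (simp add: assoc tab tab2)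
      also have "\<dots> = alpha *s (v \<odot> u)" by (simp add: al scaleR scaleL tab)
      finally show ?thesis using al by (simp add: one_eq vec.scale_right_distrib)
    qed
    moreover have "Q \<odot> P = (1/alpha) *s (e \<odot> (a \<odot> (F1 \<odot> (b \<odot> e))) + v \<odot> (a \<odot> (F1 \<odot> (b \<odot> u))))"
      unfolding P_def Q_def
      by (simp add: ring_simps assoc tab tab2 Ftab Ftab2 vec.scale_right_distrib)
    ultimately show ?thesis using a0 by simp
  qed
  have PQ: "P \<odot> Q = one"
  proof -
    have "inj (\<lambda>x. P \<odot> x)"
    proof (rule injI)
      fix x y assume "P \<odot> x = P \<odot> y"
      then have "Q \<odot> P \<odot> x = Q \<odot> P \<odot> y" by (simp add: assoc)
      then show "x = y" by (simp add: QP oneL)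
    qed
    then have "surj (\<lambda>x. P \<odot> x)" using vec.linear_inj_imp_surj[OF linL] by blast
    then obtain y where y: "P \<odot> y = one" by (metis surjD)
    have "Q = Q \<odot> P \<odot> y" using y by (simp add: assoc oneR)
    then have "Q = y" by (simp add: QP oneL)
    then show ?thesis using y by simp
  qed
  have "S X = P \<odot> X \<odot> Q" for X
  proof -
    have "S X = S X \<odot> P \<odot> Q" by (simp add: assoc PQ oneR)
    then show ?thesis by (simp add: PX)
  qed
  then show ?thesis using QP PQ by blast
qed

lemma co_lin:
  "co0 (\<Sum>i\<in>A. c i *s Y i) = (\<Sum>i\<in>A. c i * co0 (Y i))"
  "co1 (\<Sum>i\<in>A. c i *s Y i) = (\<Sum>i\<in>A. c i * co1 (Y i))"
  "co2 (\<Sum>i\<in>A. c i *s Y i) = (\<Sum>i\<in>A. c i * co2 (Y i))"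
  "co3 (\<Sum>i\<in>A. c i *s Y i) = (\<Sum>i\<in>A. c i * co3 (Y i))"
  by (simp_all add: co0_def co1_def co2_def co3_def sumL sumR scaleL scaleR kap_sum kap_scale)

lemma trace_basis:
  assumes Slin: "Vector_Spaces.linear (*s) (*s) S"
  shows "(\<Sum>i\<in>UNIV. S (axis i 1) $ i) = co0 (S e) + co1 (S u) + co2 (S v) + co3 (S (v \<odot> u))"
proof -
  have Sx: "S x = (\<Sum>i\<in>UNIV. x $ i *s S (axis i 1))" for x
  proof -
    have "S x = S (\<Sum>i\<in>UNIV. x $ i *s axis i 1)" by (simp add: basis_expansion)
    also have "\<dots> = (\<Sum>i\<in>UNIV. x $ i *s S (axis i 1))"
      by (simp add: vec.linear_sum[OF Slin] vec.linear_scale[OF Slin])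
    finally show ?thesis .
  qed
  have "S (axis i 1) $ i = co0 (S (axis i 1)) * e $ i + co1 (S (axis i 1)) * u $ i
      + co2 (S (axis i 1)) * v $ i + co3 (S (axis i 1)) * (v \<odot> u) $ i" for i
    by (subst expand) (simp add: Mx_def)
  then have "(\<Sum>i\<in>UNIV. S (axis i 1) $ i) = (\<Sum>i\<in>UNIV. e $ i * co0 (S (axis i 1)))
     + (\<Sum>i\<in>UNIV. u $ i * co1 (S (axis i 1))) + (\<Sum>i\<in>UNIV. v $ i * co2 (S (axis i 1)))
     + (\<Sum>i\<in>UNIV. (v \<odot> u) $ i * co3 (S (axis i 1)))"
    by (simp add: sum.distrib mult.commute)
  also have "\<dots> = co0 (S e) + co1 (S u) + co2 (S v) + co3 (S (v \<odot> u))"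
    by (simp add: Sx[of e] Sx[of u] Sx[of v] Sx[of "v \<odot> u"] co_lin)
  finally show ?thesis .
qed

lemma main_mu:
  assumes Slin: "Vector_Spaces.linear (*s) (*s) S"
    and Smul: "\<And>x y. S (x \<odot> y) = S x \<odot> S y" and Sone: "S one = one"
    and tr: "(\<Sum>i\<in>UNIV. S (axis i 1) $ i) = 0"
  shows "S (S X) = X"
proof -
  obtain P Q where PQ: "Q \<odot> P = one" "P \<odot> Q = one" and SX: "\<And>X. S X = P \<odot> X \<odot> Q"
    using skolem[OF assms(1-3)] by blast
  obtain p0 p1 p2 p3 where P: "P = Mx p0 p1 p2 p3" using expand by blast
  obtain q0 q1 q2 q3 where Q: "Q = Mx q0 q1 q2 q3" using expand by blast
  have "co0 (S e) + co1 (S u) + co2 (S v) + co3 (S (v \<odot> u)) = (p0 + p3) * (q0 + q3)"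
  proof -
    have 1: "S e = Mx p0 p1 p2 p3 \<odot> Mx 1 0 0 0 \<odot> Mx q0 q1 q2 q3" by (simp only: SX P Q e_Mx)
    have 2: "S u = Mx p0 p1 p2 p3 \<odot> Mx 0 1 0 0 \<odot> Mx q0 q1 q2 q3" by (simp only: SX P Q u_Mx)
    have 3: "S v = Mx p0 p1 p2 p3 \<odot> Mx 0 0 1 0 \<odot> Mx q0 q1 q2 q3" by (simp only: SX P Q v_Mx)
    have 4: "S (v \<odot> u) = Mx p0 p1 p2 p3 \<odot> Mx 0 0 0 1 \<odot> Mx q0 q1 q2 q3" by (simp only: SX P Q w_Mx)
    show ?thesis unfolding 1 2 3 4 by (simp add: Mmul co_Mx algebra_simps)
  qed
  then have "(p0 + p3) * (q0 + q3) = 0" using tr trace_basis[OF Slin] by simp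
  then have "p0 + p3 = 0 \<or> q0 + q3 = 0" by simp
  then show ?thesis
  proof
    assume h: "p0 + p3 = 0"
    have PP: "P \<odot> P = (p0 * p0 + p1 * p2) *s one"
    proof -
      have "P \<odot> P = Mx (p0 * p0 + p1 * p2) 0 0 (p0 * p0 + p1 * p2)"
      proof -
        have "p3 = - p0" using h by (simp add: eq_neg_iff_add_eq_0 add.commute)
        then show ?thesis unfolding P by (simp add: Mmul algebra_simps)
      qed
      also have "\<dots> = (p0 * p0 + p1 * p2) *s one"
        by (simp add: one_Mx[symmetric] Mx_def vec.scale_right_distrib)
      finally show ?thesis .
    qed
    have "Q \<odot> Q \<odot> (P \<odot> P) = one"
      by (metis PQ(1) assoc oneL)
    then have QQ: "(p0 * p0 + p1 * p2) *s (Q \<odot> Q) = one" by (simp only: PP scaleR oneR)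
    have "S (S X) = (P \<odot> P) \<odot> X \<odot> (Q \<odot> Q)" by (simp add: SX assoc)
    also have "\<dots> = X \<odot> ((p0 * p0 + p1 * p2) *s (Q \<odot> Q))" by (simp only: PP scaleL scaleR oneL assoc)
    finally show ?thesis by (simp only: QQ oneR)
  next
    assume h: "q0 + q3 = 0"
    have QQ: "Q \<odot> Q = (q0 * q0 + q1 * q2) *s one"
    proof -
      have "Q \<odot> Q = Mx (q0 * q0 + q1 * q2) 0 0 (q0 * q0 + q1 * q2)"
      proof -
        have "q3 = - q0" using h by (simp add: eq_neg_iff_add_eq_0 add.commute)
        then show ?thesis unfolding Q by (simp add: Mmul algebra_simps)
      qed
      also have "\<dots> = (q0 * q0 + q1 * q2) *s one"
        by (simp add: one_Mx[symmetric] Mx_def vec.scale_right_distrib)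
      finally show ?thesis .
    qed
    have "P \<odot> P \<odot> (Q \<odot> Q) = one"
      by (metis PQ(2) assoc oneL)
    then have PP: "(q0 * q0 + q1 * q2) *s (P \<odot> P) = one" by (simp only: QQ scaleR oneR)
    have "S (S X) = (P \<odot> P) \<odot> X \<odot> (Q \<odot> Q)" by (simp add: SX assoc)
    also have "\<dots> = ((q0 * q0 + q1 * q2) *s (P \<odot> P)) \<odot> X" by (simp only: QQ scaleL scaleR oneR assoc)
    finally show ?thesis by (simp only: PP oneL)
  qed
qed

end

context salg begin

theorem main_salg:
  assumes Slin: "Vector_Spaces.linear (*s) (*s) S"
    and Smul: "\<And>x y. S (x \<odot> y) = S x \<odot> S y" and Sone: "S one = one"
    and tr: "(\<Sum>i\<in>UNIV. S (axis i 1) $ i) = 0"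
  shows "S (S X) = X"
proof -
  obtain e u v where "e \<odot> e = e \<and> e \<odot> u = u \<and> u \<odot> e = 0 \<and> e \<odot> v = 0 \<and> v \<odot> e = v \<and> u \<odot> v = e
     \<and> one = e + v \<odot> u \<and> e \<noteq> 0 \<and> (\<forall>y. \<exists>lam. e \<odot> y \<odot> e = lam *s e)"
    using mu_exists by blast
  then interpret salg_mu mul one e u v
    by unfold_locales auto
  show ?thesis by (rule main_mu[OF assms])
qed

end

definition mulv :: "('i::finite \<Rightarrow> 'i \<Rightarrow> 'i \<Rightarrow> 'k::field) \<Rightarrow> 'k^'i \<Rightarrow> 'k^'i \<Rightarrow> 'k^'i" where
  "mulv c x y = (\<chi> i. \<Sum>j\<in>UNIV. \<Sum>l\<in>UNIV. c i j l * x $ j * y $ l)"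

definition onev :: "('i::finite \<Rightarrow> 'k::field) \<Rightarrow> 'k^'i" where
  "onev eps = (\<chi> i. eps i)"

lemma swap4:
  fixes f :: "'a::finite \<Rightarrow> 'b::finite \<Rightarrow> 'c::finite \<Rightarrow> 'd::finite \<Rightarrow> 'k::comm_monoid_add"
  shows "(\<Sum>j\<in>UNIV. \<Sum>l\<in>UNIV. \<Sum>a\<in>UNIV. \<Sum>b\<in>UNIV. f j l a b) = (\<Sum>l\<in>UNIV. \<Sum>a\<in>UNIV. \<Sum>b\<in>UNIV. \<Sum>j\<in>UNIV. f j l a b)"
proof -
  have "(\<Sum>j\<in>UNIV. \<Sum>l\<in>UNIV. \<Sum>a\<in>UNIV. \<Sum>b\<in>UNIV. f j l a b) = (\<Sum>l\<in>UNIV. \<Sum>j\<in>UNIV. \<Sum>a\<in>UNIV. \<Sum>b\<in>UNIV. f j l a b)"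
    by (rule sum.swap)
  also have "\<dots> = (\<Sum>l\<in>UNIV. \<Sum>a\<in>UNIV. \<Sum>j\<in>UNIV. \<Sum>b\<in>UNIV. f j l a b)"
    by (rule sum.cong[OF refl], rule sum.swap)
  also have "\<dots> = (\<Sum>l\<in>UNIV. \<Sum>a\<in>UNIV. \<Sum>b\<in>UNIV. \<Sum>j\<in>UNIV. f j l a b)"
    by (rule sum.cong[OF refl], rule sum.cong[OF refl], rule sum.swap)
  finally show ?thesis .
qed

lemma rot3:
  fixes f :: "'a::finite \<Rightarrow> 'b::finite \<Rightarrow> 'c::finite \<Rightarrow> 'k::comm_monoid_add"
  shows "(\<Sum>x\<in>UNIV. \<Sum>y\<in>UNIV. \<Sum>z\<in>UNIV. f x y z) = (\<Sum>y\<in>UNIV. \<Sum>z\<in>UNIV. \<Sum>x\<in>UNIV. f x y z)"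
proof -
  have "(\<Sum>x\<in>UNIV. \<Sum>y\<in>UNIV. \<Sum>z\<in>UNIV. f x y z) = (\<Sum>y\<in>UNIV. \<Sum>x\<in>UNIV. \<Sum>z\<in>UNIV. f x y z)"
    by (rule sum.swap)
  also have "\<dots> = (\<Sum>y\<in>UNIV. \<Sum>z\<in>UNIV. \<Sum>x\<in>UNIV. f x y z)"
    by (rule sum.cong[OF refl], rule sum.swap)
  finally show ?thesis .
qed

lemma mulv_assoc:
  assumes "is_coalgebra c eps"
  shows "mulv c (mulv c x y) z = mulv c x (mulv c y z)"
proof -
  have co: "(\<Sum>j\<in>UNIV. c i j d * c j a b) = (\<Sum>l\<in>UNIV. c i a l * c l b d)" for i a b d
    using assms by (simp add: is_coalgebra_def)
  have "mulv c (mulv c x y) z $ i = mulv c x (mulv c y z) $ i" for i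
  proof -
    have "mulv c (mulv c x y) z $ i =
      (\<Sum>j\<in>UNIV. \<Sum>d\<in>UNIV. \<Sum>a\<in>UNIV. \<Sum>b\<in>UNIV. (c i j d * c j a b) * (x $ a * y $ b * z $ d))"
      by (simp add: mulv_def sum_distrib_left sum_distrib_right mult_ac)
    also have "\<dots> = (\<Sum>d\<in>UNIV. \<Sum>a\<in>UNIV. \<Sum>b\<in>UNIV. \<Sum>j\<in>UNIV. (c i j d * c j a b) * (x $ a * y $ b * z $ d))"
      by (rule swap4)
    also have "\<dots> = (\<Sum>d\<in>UNIV. \<Sum>a\<in>UNIV. \<Sum>b\<in>UNIV. (\<Sum>l\<in>UNIV. c i a l * c l b d) * (x $ a * y $ b * z $ d))"
      by (simp only: co[symmetric] sum_distrib_right)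
    also have "\<dots> = (\<Sum>a\<in>UNIV. \<Sum>b\<in>UNIV. \<Sum>d\<in>UNIV. (\<Sum>l\<in>UNIV. c i a l * c l b d) * (x $ a * y $ b * z $ d))"
      by (rule rot3)
    also have "\<dots> = (\<Sum>a\<in>UNIV. \<Sum>b\<in>UNIV. \<Sum>d\<in>UNIV. \<Sum>l\<in>UNIV. c i a l * c l b d * (x $ a * y $ b * z $ d))"
      by (simp only: sum_distrib_right)
    also have "\<dots> = (\<Sum>a\<in>UNIV. \<Sum>l\<in>UNIV. \<Sum>b\<in>UNIV. \<Sum>d\<in>UNIV. c i a l * c l b d * (x $ a * y $ b * z $ d))"
      by (rule sum.cong[OF refl], rule rot3[symmetric])
    also have "\<dots> = mulv c x (mulv c y z) $ i"
      by (simp add: mulv_def sum_distrib_left sum_distrib_right mult_ac)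
    finally show ?thesis .
  qed
  then show ?thesis by (simp add: vec_eq_iff)
qed


lemma ifmult: "f * (if c then 1 else 0) = (if c then f else (0::'a::semiring_1))"
  "(if c then 1 else 0) * f = (if c then f else (0::'a::semiring_1))"
  by simp_all

lemma mulv_addL: "mulv c (x + y) z = mulv c x z + mulv c y z"
  by (simp add: mulv_def vec_eq_iff algebra_simps sum.distrib)
lemma mulv_addR: "mulv c x (y + z) = mulv c x y + mulv c x z"
  by (simp add: mulv_def vec_eq_iff algebra_simps sum.distrib)
lemma mulv_scaleL: "mulv c (a *s x) y = a *s mulv c x y"
  by (simp add: mulv_def vec_eq_iff sum_distrib_left mult_ac)
lemma mulv_scaleR: "mulv c x (a *s y) = a *s mulv c x y"
  by (simp add: mulv_def vec_eq_iff sum_distrib_left mult_ac)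

lemma mulv_oneR:
  assumes "is_coalgebra c eps"
  shows "mulv c x (onev eps) = x"
proof -
  have co: "(\<Sum>l\<in>UNIV. c i j l * eps l) = (if i = j then 1 else 0)" for i j
    using assms by (simp add: is_coalgebra_def)
  have "mulv c x (onev eps) $ i = x $ i" for i
  proof -
    have "mulv c x (onev eps) $ i = (\<Sum>j\<in>UNIV. x $ j * (\<Sum>l\<in>UNIV. c i j l * eps l))"
      by (simp add: mulv_def onev_def sum_distrib_left mult_ac)
    also have "\<dots> = x $ i" by (simp add: co ifmult)
    finally show ?thesis .
  qed
  then show ?thesis by (simp add: vec_eq_iff)
qed

lemma mulv_oneL:
  assumes "is_coalgebra c eps"
  shows "mulv c (onev eps) x = x"
proof -
  have co: "(\<Sum>j\<in>UNIV. c i j l * eps j) = (if i = l then 1 else 0)" for i l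
    using assms by (simp add: is_coalgebra_def)
  have "mulv c (onev eps) x $ i = x $ i" for i
  proof -
    have "mulv c (onev eps) x $ i = (\<Sum>j\<in>UNIV. \<Sum>l\<in>UNIV. c i j l * eps j * x $ l)"
      by (simp add: mulv_def onev_def)
    also have "\<dots> = (\<Sum>l\<in>UNIV. \<Sum>j\<in>UNIV. c i j l * eps j * x $ l)" by (rule sum.swap)
    also have "\<dots> = (\<Sum>l\<in>UNIV. (\<Sum>j\<in>UNIV. c i j l * eps j) * x $ l)"
      by (simp add: sum_distrib_right)
    also have "\<dots> = x $ i" by (simp add: co ifmult)
    finally show ?thesis .
  qed
  then show ?thesis by (simp add: vec_eq_iff)
qed

definition Sv :: "('i::finite \<Rightarrow> 'i \<Rightarrow> 'k::field) \<Rightarrow> 'k^'i \<Rightarrow> 'k^'i" where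
  "Sv t x = (\<chi> i. \<Sum>j\<in>UNIV. t j i * x $ j)"

lemma Sv_linear: "Vector_Spaces.linear (*s) (*s) (Sv t)"
  unfolding Vector_Spaces.linear_iff
  by (simp add: Sv_def vec.vector_space_axioms vec_eq_iff algebra_simps sum.distrib sum_distrib_left)

lemma Sv_one:
  assumes "coalgebra_map c eps t"
  shows "Sv t (onev eps) = onev eps"
proof -
  have "(\<Sum>j\<in>UNIV. t j i * eps j) = eps i" for i
  proof -
    have "counit eps (lin t (\<lambda>k. if k = i then 1 else 0)) = counit eps (\<lambda>k. if k = i then 1 else 0)"
      using assms by (simp add: coalgebra_map_def)
    then show ?thesis by (simp add: counit_def lin_def ifmult)
  qed
  then show ?thesis by (simp add: Sv_def onev_def vec_eq_iff)
qed

lemma Sv_mul: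
  assumes "coalgebra_map c eps t"
  shows "Sv t (mulv c x y) = mulv c (Sv t x) (Sv t y)"
proof -
  have key: "(\<Sum>m\<in>UNIV. t m i * c m a b) = (\<Sum>j\<in>UNIV. \<Sum>l\<in>UNIV. t a j * t b l * c i j l)" for i a b
  proof -
    have "comul c (lin t (\<lambda>k. if k = i then 1 else 0)) = lin_tensor t (comul c (\<lambda>k. if k = i then 1 else 0))"
      using assms by (simp add: coalgebra_map_def)
    then have "comul c (lin t (\<lambda>k. if k = i then 1 else 0)) a b = lin_tensor t (comul c (\<lambda>k. if k = i then 1 else 0)) a b"
      by simp
    then show ?thesis by (simp add: comul_def lin_def lin_tensor_def ifmult)
  qed
  have "Sv t (mulv c x y) $ i = mulv c (Sv t x) (Sv t y) $ i" for i
  proof -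
    have "Sv t (mulv c x y) $ i = (\<Sum>a\<in>UNIV. \<Sum>b\<in>UNIV. (\<Sum>m\<in>UNIV. t m i * c m a b) * (x $ a * y $ b))"
    proof -
      have "Sv t (mulv c x y) $ i = (\<Sum>m\<in>UNIV. \<Sum>a\<in>UNIV. \<Sum>b\<in>UNIV. t m i * c m a b * (x $ a * y $ b))"
        by (simp add: Sv_def mulv_def sum_distrib_left mult_ac)
      also have "\<dots> = (\<Sum>a\<in>UNIV. \<Sum>b\<in>UNIV. \<Sum>m\<in>UNIV. t m i * c m a b * (x $ a * y $ b))"
        by (rule rot3)
      finally show ?thesis by (simp add: sum_distrib_right)
    qed
    also have "\<dots> = (\<Sum>a\<in>UNIV. \<Sum>b\<in>UNIV. \<Sum>j\<in>UNIV. \<Sum>l\<in>UNIV. t a j * t b l * c i j l * (x $ a * y $ b))"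
      by (simp add: key sum_distrib_right)
    also have "\<dots> = (\<Sum>b\<in>UNIV. \<Sum>j\<in>UNIV. \<Sum>l\<in>UNIV. \<Sum>a\<in>UNIV. t a j * t b l * c i j l * (x $ a * y $ b))"
      by (rule swap4)
    also have "\<dots> = (\<Sum>j\<in>UNIV. \<Sum>l\<in>UNIV. \<Sum>a\<in>UNIV. \<Sum>b\<in>UNIV. t a j * t b l * c i j l * (x $ a * y $ b))"
      by (rule swap4)
    also have "\<dots> = mulv c (Sv t x) (Sv t y) $ i"
      by (simp add: Sv_def mulv_def sum_distrib_left sum_distrib_right mult_ac)
    finally show ?thesis .
  qed
  then show ?thesis by (simp add: vec_eq_iff)
qed

lemma Sv_trace: "(\<Sum>i\<in>UNIV. Sv t (axis i 1) $ i) = trace t"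
  by (simp add: Sv_def trace_def axis_def ifmult)


lemma sub_sum:
  assumes D: "is_subspace D" and fin: "finite A" and g: "\<forall>l\<in>A. g l \<in> D"
  shows "(\<lambda>j. \<Sum>l\<in>A. g l j) \<in> D"
  using fin g
proof (induct A rule: finite_induct)
  case empty then show ?case using D by (simp add: is_subspace_def)
next
  case (insert x F)
  then have "g x \<in> D" "(\<lambda>j. \<Sum>l\<in>F. g l j) \<in> D" by auto
  moreover have "\<forall>y\<in>D. (\<lambda>i. g x i + y i) \<in> D" using D \<open>g x \<in> D\<close> unfolding is_subspace_def by blast
  ultimately have "(\<lambda>i. g x i + (\<Sum>l\<in>F. g l i)) \<in> D"
    using bspec[of D "\<lambda>y. (\<lambda>i. g x i + y i) \<in> D" "\<lambda>j. \<Sum>l\<in>F. g l j"] by simp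
  then show ?case using insert by simp
qed

lemma TS:
  fixes g h :: "'i::finite \<Rightarrow> 'i \<Rightarrow> 'k::field"
  assumes D: "is_subspace D" and g: "\<And>l. g l \<in> D" and h: "\<And>l. h l \<in> D"
  shows "(\<lambda>j l'. \<Sum>l\<in>UNIV. g l j * h l l') \<in> tensor_sq D"
proof -
  define E where "E = h ` UNIV"
  define G where "G e = (\<lambda>j. \<Sum>l\<in>{l. h l = e}. g l j)" for e
  define F where "F = (\<lambda>e. (G e, e)) ` E"
  have GD: "G e \<in> D" for e unfolding G_def by (rule sub_sum[OF D]) (auto simp: g)
  have "finite F" "F \<subseteq> D \<times> D" using GD h by (auto simp: F_def E_def)
  moreover have "(\<lambda>j l'. \<Sum>l\<in>UNIV. g l j * h l l') = (\<lambda>j l'. \<Sum>(d, e)\<in>F. d j * e l')"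
  proof (intro ext)
    fix j l'
    have "(\<Sum>(d, e)\<in>F. d j * e l') = (\<Sum>e\<in>E. G e j * e l')"
      unfolding F_def by (subst sum.reindex) (auto simp: inj_on_def)
    also have "\<dots> = (\<Sum>e\<in>E. \<Sum>l\<in>{l. h l = e}. g l j * h l l')"
      unfolding G_def sum_distrib_right by (intro sum.cong refl) auto
    also have "\<dots> = (\<Sum>l\<in>UNIV. g l j * h l l')"
      using sum.image_gen[of UNIV "\<lambda>l. g l j * h l l'" h] by (simp add: E_def)
    finally show "(\<Sum>l\<in>UNIV. g l j * h l l') = (\<Sum>(d, e)\<in>F. d j * e l')" by simp
  qed
  ultimately show ?thesis unfolding tensor_sq_def by blast
qed

lemma mulv_zeroR: "mulv c x 0 = 0" by (simp add: mulv_def vec_eq_iff)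
lemma mulv_zeroL: "mulv c 0 x = 0" by (simp add: mulv_def vec_eq_iff)

lemma mulv_axisR: "mulv c x (axis l 1) $ i = (\<Sum>j\<in>UNIV. c i j l * x $ j)"
  by (simp add: mulv_def axis_def ifmult)

lemma if_mult_0: "(if P then a else 0) * b = (if P then a * b else (0::'a::semiring_0))" by simp

lemma mulv_axisL: "mulv c (axis j 1) x $ i = (\<Sum>l\<in>UNIV. c i j l * x $ l)"
  unfolding mulv_def by (subst sum.swap) (simp add: axis_def ifmult if_mult_0)


interpretation vsk: vector_space_pair "(*s) :: 'k::field \<Rightarrow> 'k^'i::finite \<Rightarrow> 'k^'i" "(*) :: 'k \<Rightarrow> 'k \<Rightarrow> 'k"
  by unfold_locales

lemma simple_bridge:
  fixes c :: "'i::finite \<Rightarrow> 'i \<Rightarrow> 'i \<Rightarrow> 'k::field"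
  assumes sc: "simple_coalgebra c eps" and x0: "x \<noteq> 0"
  shows "onev eps \<in> vec.span {mulv c (mulv c a x) b | a b. True}"
proof (rule ccontr)
  have coa: "is_coalgebra c eps" using sc by (simp add: simple_coalgebra_def)
  define J where "J = vec.span {mulv c (mulv c a x) b | a b. True}"
  assume nin: "onev eps \<notin> vec.span {mulv c (mulv c a x) b | a b. True}"
  then have nJ: "onev eps \<notin> J" by (simp add: J_def)
  have Jsub: "vec.subspace J" by (simp add: J_def vec.subspace_span)
  have JL: "mulv c a s \<in> J" if "s \<in> J" for a s
    using that unfolding J_def
  proof (induct rule: vec.span_induct_alt)
    case base then show ?case by (simp add: mulv_zeroR vec.span_zero)
  next
    case (step c' g y)
    then obtain a' b where g: "g = mulv c (mulv c a' x) b" by auto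
    have "mulv c a g = mulv c (mulv c (mulv c a a') x) b" by (simp add: g mulv_assoc[OF coa])
    then have "mulv c a g \<in> vec.span {mulv c (mulv c a x) b | a b. True}"
      by (intro vec.span_base) blast
    then show ?case using step
      by (simp add: mulv_addR mulv_scaleR vec.span_add vec.span_scale)
  qed
  have JR: "mulv c s a \<in> J" if "s \<in> J" for a s
    using that unfolding J_def
  proof (induct rule: vec.span_induct_alt)
    case base then show ?case by (simp add: mulv_zeroL vec.span_zero)
  next
    case (step c' g y)
    then obtain a' b where g: "g = mulv c (mulv c a' x) b" by auto
    have "mulv c g a = mulv c (mulv c a' x) (mulv c b a)" by (simp add: g mulv_assoc[OF coa])
    then have "mulv c g a \<in> vec.span {mulv c (mulv c a x) b | a b. True}"
      by (intro vec.span_base) blast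
    then show ?case using step
      by (simp add: mulv_addL mulv_scaleL vec.span_add vec.span_scale)
  qed
  have xJ: "x \<in> J"
  proof -
    have "x = mulv c (mulv c (onev eps) x) (onev eps)" by (simp add: mulv_oneL[OF coa] mulv_oneR[OF coa])
    then show ?thesis unfolding J_def by (intro vec.span_base) blast
  qed
  define D where "D = {z :: 'i \<Rightarrow> 'k. \<forall>\<phi>\<in>J. (\<Sum>i\<in>UNIV. \<phi> $ i * z i) = 0}"
  have Dsub: "is_subspace D"
    unfolding is_subspace_def D_def
    by (simp add: algebra_simps sum.distrib sum_distrib_left[symmetric])
  have DnU: "D \<noteq> UNIV"
  proof
    assume DU: "D = UNIV"
    obtain i where xi: "x $ i \<noteq> 0" using x0 by (auto simp: vec_eq_iff)
    have "(\<lambda>j. if j = i then (1::'k) else 0) \<in> D" using DU by simp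
    then have "(\<Sum>j\<in>UNIV. x $ j * (if j = i then 1 else 0)) = 0" using xJ by (simp add: D_def)
    then show False using xi by (simp add: ifmult)
  qed
  have Dn0: "D \<noteq> {\<lambda>_. 0}"
  proof
    assume D0: "D = {\<lambda>_. 0}"
    obtain B0 where B0: "B0 \<subseteq> J" "vec.independent B0" "J \<subseteq> vec.span B0" "card B0 = vec.dim J"
      using vec.basis_exists[of J] by blast
    have spanB0: "vec.span B0 = J" using vec.span_subspace[OF B0(1) B0(3) Jsub] .
    have indB: "vec.independent (insert (onev eps) B0)"
      using vec.independent_insertI[OF _ B0(2)] nJ spanB0 by simp
    then obtain g where glin: "Vector_Spaces.linear (*s) (*) g"
      and gB: "\<forall>y\<in>insert (onev eps) B0. g y = (if y = onev eps then 1 else 0)"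
      using vsk.linear_independent_extend[OF indB, of "\<lambda>y. if y = onev eps then 1 else 0"] by blast
    have g1: "g (onev eps) = 1" using gB by simp
    have gB0: "g y = 0" if "y \<in> B0" for y
      using gB that nJ B0(1) by auto
    have gJ: "g y = 0" if "y \<in> J" for y
      using vsk.linear_eq_0_on_span[OF glin, of B0 y] gB0 that spanB0 by blast
    have gsum: "g y = (\<Sum>i\<in>UNIV. y $ i * g (axis i 1))" for y
    proof -
      have "g y = g (\<Sum>i\<in>UNIV. y $ i *s axis i 1)" by (simp add: basis_expansion)
      also have "\<dots> = (\<Sum>i\<in>UNIV. y $ i * g (axis i 1))"
        by (simp add: vsk.linear_sum[OF glin] vsk.linear_scale[OF glin])
      finally show ?thesis .
    qed
    have "(\<lambda>i. g (axis i 1)) \<in> D" unfolding D_def using gJ by (simp add: gsum[symmetric])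
    then have "(\<lambda>i. g (axis i 1)) = (\<lambda>_. 0)" using D0 by simp
    then have "\<forall>i. g (axis i 1) = 0" by (simp add: fun_eq_iff)
    then have "g (onev eps) = 0" by (subst gsum) simp
    then show False using g1 by simp
  qed
  have subc: "comul c z \<in> tensor_sq D" if zD: "z \<in> D" for z
  proof -
    let ?M = "comul c z"
    have col: "(\<lambda>j. ?M j l) \<in> D" for l
    proof -
      have "(\<Sum>j\<in>UNIV. \<phi> $ j * ?M j l) = 0" if "\<phi> \<in> J" for \<phi>
      proof -
        have "(\<Sum>j\<in>UNIV. \<phi> $ j * ?M j l) = (\<Sum>i\<in>UNIV. mulv c \<phi> (axis l 1) $ i * z i)"
          unfolding mulv_axisR comul_def
          by (simp add: sum_distrib_left sum_distrib_right mult_ac) (rule sum.swap)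
        also have "\<dots> = 0" using zD JR[OF that] by (simp add: D_def)
        finally show ?thesis .
      qed
      then show ?thesis by (simp add: D_def)
    qed
    have row: "(\<lambda>l. ?M j l) \<in> D" for j
    proof -
      have "(\<Sum>l\<in>UNIV. \<phi> $ l * ?M j l) = 0" if "\<phi> \<in> J" for \<phi>
      proof -
        have "(\<Sum>l\<in>UNIV. \<phi> $ l * ?M j l) = (\<Sum>i\<in>UNIV. mulv c (axis j 1) \<phi> $ i * z i)"
          unfolding mulv_axisL comul_def
          by (simp add: sum_distrib_left sum_distrib_right mult_ac) (rule sum.swap)
        also have "\<dots> = 0" using zD JL[OF that] by (simp add: D_def)
        finally show ?thesis .
      qed
      then show ?thesis by (simp add: D_def)
    qed
    define Dv where "Dv = {w :: 'k^'i. vec_nth w \<in> D}"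
    have Dvsub: "vec.subspace Dv"
    proof -
      have "vec_nth (0::'k^'i) = (\<lambda>_. 0)" by (simp add: fun_eq_iff)
      moreover have "vec_nth (w1 + w2) = (\<lambda>i. vec_nth w1 i + vec_nth w2 i)" for w1 w2 :: "'k^'i"
        by (simp add: fun_eq_iff)
      moreover have "vec_nth (a *s w1) = (\<lambda>i. a * vec_nth w1 i)" for a and w1 :: "'k^'i"
        by (simp add: fun_eq_iff)
      ultimately show ?thesis using Dsub unfolding vec.subspace_def Dv_def is_subspace_def by auto
    qed
    obtain BD where BD: "BD \<subseteq> Dv" "vec.independent BD" "Dv \<subseteq> vec.span BD" "card BD = vec.dim Dv"
      using vec.basis_exists[of Dv] by blast
    obtain B where B: "BD \<subseteq> B" "vec.independent B" "UNIV \<subseteq> vec.span B"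
      by (rule vec.maximal_independent_subset_extend[of BD UNIV]) (use BD in auto)
    have "\<exists>g. Vector_Spaces.linear (*s) (*s) g \<and> (\<forall>y\<in>B. g y = (if y \<in> BD then y else 0))"
      by (rule vec.linear_independent_extend[OF B(2)])
    then obtain pr where prlin: "Vector_Spaces.linear (*s) (*s) pr"
      and prB: "\<forall>y\<in>B. pr y = (if y \<in> BD then y else 0)"
      by blast
    have prD: "pr y \<in> Dv" for y
    proof -
      have "y \<in> vec.span B" using B(3) by auto
      then show ?thesis
      proof (induct rule: vec.span_induct_alt)
        case base then show ?case using vec.linear_0[OF prlin] vec.subspace_0[OF Dvsub] by simp
      next
        case (step c' x' y')
        have "pr x' \<in> Dv" using step(1) prB BD(1) vec.subspace_0[OF Dvsub] by auto
        then show ?case using step vec.linear_add[OF prlin] vec.linear_scale[OF prlin]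
          vec.subspace_add[OF Dvsub] vec.subspace_scale[OF Dvsub] by simp
      qed
    qed
    have prid: "pr d = d" if "d \<in> Dv" for d
    proof -
      have "d \<in> vec.span BD" using that BD(3) by auto
      then show ?thesis
      proof (induct rule: vec.span_induct_alt)
        case base then show ?case using vec.linear_0[OF prlin] by simp
      next
        case (step c' x' y')
        have "pr x' = x'" using step(1) prB B(1) by auto
        then show ?case using step vec.linear_add[OF prlin] vec.linear_scale[OF prlin] by simp
      qed
    qed
    have Mrep: "?M = (\<lambda>j l'. \<Sum>l\<in>UNIV. ?M j l * vec_nth (pr (axis l 1)) l')"
    proof (intro ext)
      fix j l'
      have rv: "(\<chi> l. ?M j l) \<in> Dv" using row[of j] by (simp add: Dv_def vec_lambda_inverse)
      have "(\<Sum>l\<in>UNIV. ?M j l * vec_nth (pr (axis l 1)) l') = (\<Sum>l\<in>UNIV. ?M j l *s pr (axis l 1)) $ l'"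
        by simp
      also have "(\<Sum>l\<in>UNIV. ?M j l *s pr (axis l 1)) = pr (\<Sum>l\<in>UNIV. (\<chi> l. ?M j l) $ l *s axis l 1)"
        by (simp add: vec.linear_sum[OF prlin] vec.linear_scale[OF prlin])
      also have "\<dots> = (\<chi> l. ?M j l)" by (simp only: basis_expansion prid[OF rv])
      finally show "?M j l' = (\<Sum>l\<in>UNIV. ?M j l * vec_nth (pr (axis l 1)) l')" by simp
    qed
    have "(\<lambda>j l'. \<Sum>l\<in>UNIV. ?M j l * vec_nth (pr (axis l 1)) l') \<in> tensor_sq D"
      using TS[OF Dsub, of "\<lambda>l j. ?M j l" "\<lambda>l. vec_nth (pr (axis l 1))"] col prD
      by (simp add: Dv_def)
    then show ?thesis by (subst Mrep)
  qed
  have "is_subcoalgebra c D" using Dsub subc by (simp add: is_subcoalgebra_def)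
  then show False using sc[unfolded simple_coalgebra_def] DnU Dn0 by blast
qed


theorem lemma2p2:
  fixes c :: "'i::finite \<Rightarrow> 'i \<Rightarrow> 'i \<Rightarrow> 'k::field_char_0"
    and eps :: "'i \<Rightarrow> 'k"
    and t :: "'i \<Rightarrow> 'i \<Rightarrow> 'k"
  assumes "alg_closed TYPE('k)"
    and "card (UNIV :: 'i set) = 4"
    and "simple_coalgebra c eps"
    and "coalgebra_aut c eps t"
    and "finite_order (lin t)"
    and "trace t = 0"
  shows "ord (lin t) = 2"
proof -
  have coa: "is_coalgebra c eps" using assms(3) by (simp add: simple_coalgebra_def)
  have cm: "coalgebra_map c eps t" using assms(4) by (simp add: coalgebra_aut_def)
  interpret salg "mulv c" "onev eps"
  proof (unfold_locales)
    fix x :: "'k^'i" assume "x \<noteq> 0"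
    then show "onev eps \<in> vec.span {mulv c (mulv c a x) b | a b. True}"
      by (rule simple_bridge[OF assms(3)])
  qed (simp_all add: mulv_assoc[OF coa] mulv_addL mulv_addR mulv_scaleL mulv_scaleR
         mulv_oneL[OF coa] mulv_oneR[OF coa] assms(1) assms(2))
  have SS: "Sv t (Sv t y) = y" for y
    by (rule main_salg[OF Sv_linear Sv_mul[OF cm] Sv_one[OF cm]]) (simp add: Sv_trace assms(6))
  have key: "(\<Sum>j\<in>UNIV. t m j * t j i) = (if m = i then 1 else 0)" for m i
  proof -
    have "Sv t (Sv t (axis m 1)) $ i = axis m 1 $ i" by (simp add: SS)
    then show ?thesis by (simp add: Sv_def axis_def ifmult mult.commute)
  qed
  have ll: "lin t (lin t x) = x" for x
  proof
    fix a
    have "lin t (lin t x) a = (\<Sum>i\<in>UNIV. \<Sum>m\<in>UNIV. t a i * t i m * x m)"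
      by (simp add: lin_def sum_distrib_left mult.assoc)
    also have "\<dots> = (\<Sum>m\<in>UNIV. \<Sum>i\<in>UNIV. t a i * t i m * x m)" by (rule sum.swap)
    also have "\<dots> = (\<Sum>m\<in>UNIV. (\<Sum>i\<in>UNIV. t a i * t i m) * x m)" by (simp add: sum_distrib_right)
    also have "\<dots> = x a" by (simp add: key ifmult)
    finally show "lin t (lin t x) a = x a" .
  qed
  have f2: "lin t ^^ 2 = id" using ll by (simp add: numeral_2_eq_2 fun_eq_iff)
  have f1: "lin t ^^ 1 \<noteq> id"
  proof
    assume "lin t ^^ 1 = id"
    then have lid: "lin t x = x" for x by (simp add: fun_eq_iff)
    have "t i m = (if i = m then 1 else 0)" for i m
    proof -
      have "lin t (\<lambda>k. if k = m then 1 else 0) i = (if i = m then 1 else 0)" by (simp add: lid)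
      then show ?thesis by (simp add: lin_def ifmult)
    qed
    then have "trace t = of_nat (card (UNIV :: 'i set))" by (simp add: trace_def)
    then show False using assms(2) assms(6) by simp
  qed
  show ?thesis
    unfolding ord_def
  proof (rule Least_equality)
    show "0 < (2::nat) \<and> lin t ^^ 2 = id" using f2 by simp
  next
    fix y assume "0 < y \<and> lin t ^^ y = id"
    then have "y \<noteq> 1" "0 < y" using f1 by auto
    then show "2 \<le> y" by linarith
  qed
qed


end
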